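(* Let $a_n = \left(\frac23\right)^n p_n\!\left(\frac14\right)$ for $n\ge0$. Then $a_0=1$ and for all $n\ge 0$, \[ 3a_{n+1} = 2a_n + \sum_{k=0}^n\binom{n+1}{k}a_k + 3. \]
   Context: Define polynomial sequences $(p_k(x))_{k\ge -1}$ and $(q_k(x))_{k\ge -1}$ by $p_{-1}(x)=0$, $q_{-1}(x)=1$ and, for $k\ge -1$, $p_{k+1}(x) = 2(kx+1)p_k(x) + 2x(1-x)p_k'(x) + q_k(x)$, $q_{k+1}(x) = (2(k+1)x+1)q_k(x) + 2x(1-x)q_k'(x)$. *)

theory Defs
  imports "HOL-Computational_Algebra.Polynomial"
begin

text \<open>pq m = (p_{m-1}, q_{m-1}); the index shift handles the starting index -1.
  For m = Suc j the recursion step uses k = j - 1 (an integer, possibly -1).\<close>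
fun pq :: "nat \<Rightarrow> real poly \<times> real poly" where
  "pq 0 = (0, 1)"
| "pq (Suc j) =
     (let (pk, qk) = pq j; k = real_of_int (int j - 1) in
      (smult 2 [:1, k:] * pk + smult 2 [:0, 1, -1:] * pderiv pk + qk,
       [:1, 2 * (k + 1):] * qk + smult 2 [:0, 1, -1:] * pderiv qk))"

definition p :: "int \<Rightarrow> real poly" where
  "p k = fst (pq (nat (k + 1)))"

definition q :: "int \<Rightarrow> real poly" where
  "q k = snd (pq (nat (k + 1)))"

definition a_seq :: "nat \<Rightarrow> real" where
  "a_seq n = (2/3) ^ n * poly (p (int n)) (1/4)"

end

theory Submission
  imports Defs
begin

definition U :: "real poly" where "U = [:2, -2:]"
definition XX :: "real poly" where "XX = [:0, 1:]"

definition AA :: "real poly" where "AA = smult 2 [:0, 1, -1:]"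
definition CC :: "real \<Rightarrow> real \<Rightarrow> real poly" where "CC d w = [:d, 2 * w:]"

definition L :: "real \<Rightarrow> real \<Rightarrow> real poly \<Rightarrow> real poly" where
  "L d w f = AA * pderiv f + CC d w * f"

lemma L_add: "L d w (f + g) = L d w f + L d w g"
  by (simp add: L_def pderiv_add algebra_simps)

lemma L_diff: "L d w (f - g) = L d w f - L d w g"
  by (simp add: L_def pderiv_diff algebra_simps)

lemma L_zero: "L d w 0 = 0"
  by (simp add: L_def)

lemma L_of_nat: "L d w (of_nat c * f) = of_nat c * L d w f"
  by (simp add: L_def of_nat_poly pderiv_smult algebra_simps)

lemma L_numeral: "L d w (numeral c * f) = numeral c * L d w f"
  using L_of_nat[of d w "numeral c" f] by simp

lemma L_sum: "L d w (\<Sum>k\<in>A. f k) = (\<Sum>k\<in>A. L d w (f k))"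
  by (induction A rule: infinite_finite_induct) (auto simp: L_zero L_add)

lemma L_U: "L d w (U * f) = U * L d (w - 1) f"
proof -
  have h: "AA * pderiv U = - smult 2 XX * U" by (simp add: AA_def U_def XX_def pderiv_pCons)
  have "AA * (f * pderiv U) = f * (AA * pderiv U)" by (simp add: mult.left_commute)
  also have "\<dots> = - smult 2 (U * (XX * f))" by (simp add: h mult.commute mult.left_commute)
  finally have h2: "AA * (f * pderiv U) = - smult 2 (U * (XX * f))" .
  moreover note h
  moreover have "CC d w = CC d (w - 1) + smult 2 XX" by (simp add: CC_def XX_def)
  ultimately show ?thesis by (simp add: L_def pderiv_mult algebra_simps)
qed

lemma L_Upow: "L d w (U ^ j * f) = U ^ j * L d (w - real j) f"
proof (induction j arbitrary: w)
  case 0 then show ?case by simp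
next
  case (Suc j)
  have "L d w (U ^ Suc j * f) = L d w (U * (U ^ j * f))" by (simp add: mult.assoc)
  also have "\<dots> = U * L d (w - 1) (U ^ j * f)" by (rule L_U)
  also have "\<dots> = U * (U ^ j * L d (w - 1 - real j) f)" by (simp add: Suc)
  finally show ?case by (simp add: algebra_simps)
qed

lemma L_X: "L d w (XX * f) = XX * U * f + XX * L d w f"
proof -
  have "AA * pderiv XX = XX * U" by (simp add: AA_def U_def XX_def pderiv_pCons)
  then show ?thesis by (simp add: L_def pderiv_mult algebra_simps)
qed

definition SS :: "(nat \<Rightarrow> real poly) \<Rightarrow> nat \<Rightarrow> real poly" where
  "SS f m = (\<Sum>k\<le>m. of_nat (m choose k) * U ^ (m - k) * f k)"

lemma SS_Suc: "SS f (Suc m) = U * SS f m + SS (\<lambda>k. f (Suc k)) m"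
proof -
  have A: "(\<Sum>k\<le>Suc m. of_nat (m choose k) * U ^ (Suc m - k) * f k) = U * SS f m"
  proof -
    have "(\<Sum>k\<le>Suc m. of_nat (m choose k) * U ^ (Suc m - k) * f k)
        = (\<Sum>k\<le>m. of_nat (m choose k) * U ^ (Suc m - k) * f k)"
      by (simp add: sum.atMost_Suc)
    also have "\<dots> = (\<Sum>k\<le>m. U * (of_nat (m choose k) * U ^ (m - k) * f k))"
      by (rule sum.cong) (auto simp: Suc_diff_le mult_ac)
    finally show ?thesis by (simp add: SS_def sum_distrib_left)
  qed
  have B: "(\<Sum>k\<le>Suc m. of_nat (m choose k) * U ^ (Suc m - k) * f k)
      = U ^ Suc m * f 0 + (\<Sum>k\<le>m. of_nat (m choose Suc k) * U ^ (m - k) * f (Suc k))"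
    by (subst sum.atMost_Suc_shift) simp
  have "SS f (Suc m) = U ^ Suc m * f 0 +
      (\<Sum>k\<le>m. of_nat (Suc m choose Suc k) * U ^ (Suc m - Suc k) * f (Suc k))"
    unfolding SS_def by (subst sum.atMost_Suc_shift) simp
  also have "\<dots> = U ^ Suc m * f 0 +
      (\<Sum>k\<le>m. of_nat (m choose Suc k) * U ^ (m - k) * f (Suc k)) +
      (\<Sum>k\<le>m. of_nat (m choose k) * U ^ (m - k) * f (Suc k))"
    by (simp add: sum.distrib algebra_simps)
  also have "\<dots> = U * SS f m + SS (\<lambda>k. f (Suc k)) m"
    using A B by (simp add: SS_def)
  finally show ?thesis .
qed

lemma L_SS: "L d w (SS f m) = (\<Sum>k\<le>m. of_nat (m choose k) * U ^ (m - k) * L d (w - real (m - k)) (f k))"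
  unfolding SS_def L_sum
  by (rule sum.cong) (simp_all add: mult.assoc L_of_nat L_Upow)

definition P :: "nat \<Rightarrow> real poly" where "P n = fst (pq (Suc n))"
definition Q :: "nat \<Rightarrow> real poly" where "Q n = snd (pq (Suc n))"

lemma P0: "P 0 = 1" by (simp add: P_def)
lemma Q0: "Q 0 = 1" by (simp add: Q_def)

lemma PQ_Suc: "P (Suc n) = L 2 (real n) (P n) + Q n \<and> Q (Suc n) = L 1 (real n + 1) (Q n)"
proof -
  obtain a b where ab: "pq (Suc n) = (a, b)" by force
  have k: "real_of_int (int (Suc n) - 1) = real n" by simp
  show ?thesis
    unfolding P_def Q_def pq.simps(2)[of "Suc n"] ab
    by (simp add: L_def AA_def CC_def Let_def algebra_simps)
qed

lemma P_Suc: "P (Suc n) = L 2 (real n) (P n) + Q n"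
  using PQ_Suc by blast

lemma Q_Suc: "Q (Suc n) = L 1 (real n + 1) (Q n)"
  using PQ_Suc by blast

definition Kq :: "nat \<Rightarrow> real poly" where
  "Kq n = 4 * Q (Suc n) - 2 * (U * Q n) - 4 * (XX * SS Q (Suc n))"

lemma Kq_Suc: "Kq (Suc n) = L 1 (real n + 2) (Kq n)"
proof -
  have e1: "L 1 (real n + 2) (Q (Suc n)) = Q (Suc (Suc n))"
  proof -
    have "real (Suc n) + 1 = real n + 2" by simp
    then show ?thesis using Q_Suc[of "Suc n"] by metis
  qed
  have e2: "L 1 (real n + 2) (U * Q n) = U * Q (Suc n)"
    by (simp add: L_U Q_Suc algebra_simps)
  have e3: "L 1 (real n + 2) (SS Q (Suc n)) = SS (\<lambda>k. Q (Suc k)) (Suc n)"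
    unfolding L_SS unfolding SS_def
    by (rule sum.cong) (auto simp: Q_Suc of_nat_diff add.commute)
  have e4: "L 1 (real n + 2) (XX * SS Q (Suc n)) = XX * SS Q (Suc (Suc n))"
    by (simp only: L_X e3 SS_Suc[of Q "Suc n"]) (simp add: algebra_simps)
  show ?thesis
    unfolding Kq_def L_diff L_numeral e1 e2 e4 ..
qed

lemma Kq0: "Kq 0 = 0"
  by (simp add: Kq_def SS_def Q_Suc Q0 L_def AA_def CC_def U_def XX_def numeral_poly)

lemma Kq_zero: "Kq n = 0"
  by (induction n) (simp_all add: Kq0 Kq_Suc L_zero)

definition Fp :: "nat \<Rightarrow> real poly" where
  "Fp n = 4 * P (Suc n) - 2 * (U * P n) - 4 * (XX * SS P (Suc n)) - 2 * U ^ (n + 2)"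

lemma Fp_Suc: "Fp (Suc n) = L 2 (real n + 1) (Fp n) + Kq n"
proof -
  have f1: "L 2 (real n + 1) (P (Suc n)) = P (Suc (Suc n)) - Q (Suc n)"
  proof -
    have "real (Suc n) = real n + 1" by simp
    then show ?thesis using P_Suc[of "Suc n"] by (metis add_diff_cancel_right')
  qed
  have f2: "L 2 (real n + 1) (U * P n) = U * (P (Suc n) - Q n)"
    by (simp add: L_U P_Suc)
  have f3: "L 2 (real n + 1) (SS P (Suc n)) = SS (\<lambda>k. P (Suc k)) (Suc n) - SS Q (Suc n)"
  proof -
    have "L 2 (real n + 1) (SS P (Suc n)) =
        (\<Sum>k\<le>Suc n. of_nat (Suc n choose k) * U ^ (Suc n - k) * P (Suc k)
           - of_nat (Suc n choose k) * U ^ (Suc n - k) * Q k)"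
      unfolding L_SS
      by (rule sum.cong) (auto simp: P_Suc of_nat_diff algebra_simps)
    then show ?thesis by (simp add: SS_def sum_subtractf)
  qed
  have f4: "L 2 (real n + 1) (XX * SS P (Suc n)) = XX * (SS P (Suc (Suc n)) - SS Q (Suc n))"
    by (simp only: L_X f3 SS_Suc[of P "Suc n"]) (simp add: algebra_simps)
  have f5: "L 2 (real n + 1) (U ^ (n + 2)) = U ^ (n + 3)"
  proof -
    have "L 2 (real n + 1) (U ^ (n + 2) * 1) = U ^ (n + 2) * L 2 (real n + 1 - real (n + 2)) 1"
      by (rule L_Upow)
    also have "L 2 (real n + 1 - real (n + 2)) 1 = U"
      by (simp add: L_def CC_def U_def)
    finally have e1: "L 2 (real n + 1) (U ^ (n + 2)) = U ^ (n + 2) * U" by simp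
    have e2: "U ^ (n + 3) = U ^ (n + 2) * U" by (metis add_Suc_right numeral_2_eq_2 numeral_3_eq_3 power_Suc2)
    show ?thesis unfolding e1 e2 ..
  qed
  show ?thesis
    unfolding Fp_def Kq_def L_diff L_numeral f1 f2 f4 f5
    by (simp add: algebra_simps numeral_3_eq_3)
qed

lemma Fp0: "Fp 0 = 0"
  by (simp add: Fp_def SS_def P_Suc Q0 P0 L_def AA_def CC_def U_def XX_def numeral_poly one_pCons)

lemma Fp_zero: "Fp n = 0"
  by (induction n) (simp_all add: Fp0 Fp_Suc L_zero Kq_zero)

lemma p_int: "p (int n) = P n"
proof -
  have h: "nat (int n + 1) = Suc n" by simp
  show ?thesis unfolding p_def P_def h ..
qed

lemma Pk: "poly (P k) (1/4) = (3/2) ^ k * a_seq k"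
proof -
  have "(3/2::real) ^ k * (2/3) ^ k = 1"
    by (simp add: power_mult_distrib[symmetric])
  then show ?thesis by (simp add: a_seq_def p_int mult.assoc[symmetric])
qed

lemma rec_n: "3 * a_seq (n + 1) =
        2 * a_seq n + (\<Sum>k = 0..n. real ((n + 1) choose k) * a_seq k) + 3"
proof -
  define c :: real where "c = 3/2"
  have c0: "c ^ (n + 1) \<noteq> 0" by (simp add: c_def)
  have pU: "poly U (1/4) = c" by (simp add: U_def c_def)
  have pX: "poly XX (1/4) = 1/4" by (simp add: XX_def)
  have Pk': "poly (P k) (1/4) = c ^ k * a_seq k" for k by (simp add: Pk c_def)
  have "poly (Fp n) (1/4) = 0" by (simp add: Fp_zero)
  then have E: "4 * (c ^ (Suc n) * a_seq (Suc n)) - 2 * (c * (c ^ n * a_seq n))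
     - 4 * (1/4 * (\<Sum>k\<le>Suc n. real (Suc n choose k) * c ^ (Suc n - k) * (c ^ k * a_seq k)))
     - 2 * c ^ (n + 2) = 0"
    unfolding Fp_def SS_def
    by (simp only: poly_diff poly_mult poly_power poly_numeral poly_of_nat poly_sum pU pX Pk')
  have S: "(\<Sum>k\<le>Suc n. real (Suc n choose k) * c ^ (Suc n - k) * (c ^ k * a_seq k))
      = c ^ (n+1) * (\<Sum>k\<le>Suc n. real (Suc n choose k) * a_seq k)"
    unfolding sum_distrib_left
  proof (rule sum.cong)
    fix k assume "k \<in> {..Suc n}"
    then have "c ^ (Suc n - k) * c ^ k = c ^ (n + 1)"
      by (simp add: power_add[symmetric])
    then show "real (Suc n choose k) * c ^ (Suc n - k) * (c ^ k * a_seq k)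
        = c ^ (n + 1) * (real (Suc n choose k) * a_seq k)"
      by (metis mult.assoc mult.left_commute)
  qed simp
  have S2: "(\<Sum>k\<le>Suc n. real (Suc n choose k) * a_seq k)
      = (\<Sum>k = 0..n. real ((n + 1) choose k) * a_seq k) + a_seq (n + 1)"
    by (simp add: sum.atMost_Suc atLeast0AtMost)
  have c1: "c * (c ^ n * a_seq n) = c ^ (n + 1) * a_seq n" by simp
  have c2: "c ^ (n + 2) = c ^ (n + 1) * (3/2)" by (simp add: c_def)
  have c3: "c ^ Suc n = c ^ (n + 1)" by simp
  define m where "m = c ^ (n + 1)"
  define T where "T = (\<Sum>k\<le>Suc n. real (Suc n choose k) * a_seq k)"
  have E2: "4 * (m * a_seq (Suc n)) - 2 * (m * a_seq n) - 4 * (1/4 * (m * T)) - 2 * (m * (3/2)) = 0"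
    using E unfolding S c1 c2 c3 m_def[symmetric] T_def[symmetric] .
  have "m * (4 * a_seq (n+1) - 2 * a_seq n - T - 3) = 0"
    using E2 by (simp add: right_diff_distrib)
  then have "c ^ (n + 1) * (4 * a_seq (n+1) - 2 * a_seq n
       - (\<Sum>k\<le>Suc n. real (Suc n choose k) * a_seq k) - 3) = 0"
    unfolding m_def T_def .
  with c0 have "4 * a_seq (n+1) - 2 * a_seq n
       - (\<Sum>k\<le>Suc n. real (Suc n choose k) * a_seq k) - 3 = 0" by simp
  then show ?thesis unfolding S2 by simp
qed

theorem proposition3p4:
  shows "a_seq 0 = 1 \<and>
    (\<forall>n::nat. 3 * a_seq (n + 1) =
        2 * a_seq n + (\<Sum>k = 0..n. real ((n + 1) choose k) * a_seq k) + 3)"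
proof -
  have "a_seq 0 = 1" using p_int[of 0] by (simp add: a_seq_def P0)
  then show ?thesis using rec_n by blast
qed

end
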